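(* Let $c\ge1$ and let $G$ be a finite nilpotent group of class $t\ge1$. For $2\le j\le t$ put $Q_j=G/\gamma_j(G)$ and for $1\le j\le t-1$ let $e_j=\min\{\exp(Q_{j+1}),\exp(\gamma_{j+1}(G))\}$. Then $$\exp(M^{(c)}(G))\le\exp(G/G')\prod_{j=1}^{t-1}e_j.$$ In particular, if $G$ is a $p$-group of exponent $p^e$, then $\exp(M^{(c)}(G))\le p^{et}$.
   Context: $\gamma_1(X)=X$, $\gamma_{i+1}(X)=[\gamma_i(X),X]$; $G'=\gamma_2(G)$. The $c$-nilpotent multiplier of $G\cong F/R$ ($F$ free) is $M^{(c)}(G)=(R\cap\gamma_{c+1}(F))/[R,{}_cF]$, where $[R,{}_0F]=R$, $[R,{}_{i+1}F]=[[R,{}_iF],F]$; it is independent of the presentation. $\exp(X)$ is the exponent of $X$. *)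

theory Defs
  imports "HOL-Algebra.Algebra"
begin

definition comm_subgroup :: "('a, 'b) monoid_scheme \<Rightarrow> 'a set \<Rightarrow> 'a set \<Rightarrow> 'a set" where
  "comm_subgroup G H K =
     generate G {inv\<^bsub>G\<^esub> a \<otimes>\<^bsub>G\<^esub> inv\<^bsub>G\<^esub> b \<otimes>\<^bsub>G\<^esub> a \<otimes>\<^bsub>G\<^esub> b | a b. a \<in> H \<and> b \<in> K}"

text \<open>Lower central series: gamma_1(G) = G, gamma_{i+1}(G) = [gamma_i(G), G].
  (gamma 0 is set to G as a harmless convention; it is never used.)\<close>
fun lcs :: "('a, 'b) monoid_scheme \<Rightarrow> nat \<Rightarrow> 'a set" where
  "lcs G 0 = carrier G"
| "lcs G (Suc 0) = carrier G"
| "lcs G (Suc (Suc i)) = comm_subgroup G (lcs G (Suc i)) (carrier G)"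

fun iter_comm :: "('a, 'b) monoid_scheme \<Rightarrow> 'a set \<Rightarrow> nat \<Rightarrow> 'a set" where
  "iter_comm F R 0 = R"
| "iter_comm F R (Suc i) = comm_subgroup F (iter_comm F R i) (carrier F)"

definition group_exponent :: "('a, 'b) monoid_scheme \<Rightarrow> nat" where
  "group_exponent G =
     (if \<exists>n::nat>0. \<forall>x\<in>carrier G. x [^]\<^bsub>G\<^esub> n = \<one>\<^bsub>G\<^esub>
      then LEAST n::nat. n > 0 \<and> (\<forall>x\<in>carrier G. x [^]\<^bsub>G\<^esub> n = \<one>\<^bsub>G\<^esub>)
      else 0)"

definition reduced_word :: "('a \<times> bool) list \<Rightarrow> bool" where
  "reduced_word w \<longleftrightarrow>
     (\<forall>i. Suc i < length w \<longrightarrow>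
        \<not> (fst (w ! i) = fst (w ! Suc i) \<and> snd (w ! i) \<noteq> snd (w ! Suc i)))"

definition word_eval :: "('a, 'b) monoid_scheme \<Rightarrow> ('a \<times> bool) list \<Rightarrow> 'a" where
  "word_eval G w =
     foldr (\<lambda>(x, s) acc. (if s then x else inv\<^bsub>G\<^esub> x) \<otimes>\<^bsub>G\<^esub> acc) w \<one>\<^bsub>G\<^esub>"

definition free_basis :: "('a, 'b) monoid_scheme \<Rightarrow> 'a set \<Rightarrow> bool" where
  "free_basis K B \<longleftrightarrow>
     B \<subseteq> carrier K \<and> generate K B = carrier K \<and>
     (\<forall>w. w \<noteq> [] \<and> set (map fst w) \<subseteq> B \<and> reduced_word w \<longrightarrow> word_eval K w \<noteq> \<one>\<^bsub>K\<^esub>)"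

definition free_group :: "('a, 'b) monoid_scheme \<Rightarrow> bool" where
  "free_group F \<longleftrightarrow> group F \<and> (\<exists>B. free_basis F B)"

text \<open>c-nilpotent multiplier of G = F/R, as the group (R \<inter> gamma_{c+1}(F)) / [R,_c F].\<close>
definition c_nilp_multiplier ::
  "('a, 'b) monoid_scheme \<Rightarrow> 'a set \<Rightarrow> nat \<Rightarrow> 'a set monoid" where
  "c_nilp_multiplier F R c =
     (F\<lparr>carrier := R \<inter> lcs F (Suc c)\<rparr>) Mod (iter_comm F R c)"

end

theory Submission
  imports Defs
begin


definition cm :: "('a, 'b) monoid_scheme \<Rightarrow> 'a \<Rightarrow> 'a \<Rightarrow> 'a" where
  "cm G a b = inv\<^bsub>G\<^esub> a \<otimes>\<^bsub>G\<^esub> inv\<^bsub>G\<^esub> b \<otimes>\<^bsub>G\<^esub> a \<otimes>\<^bsub>G\<^esub> b"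

context group begin

lemma canc1 [simp]: "x \<in> carrier G \<Longrightarrow> y \<in> carrier G \<Longrightarrow> inv x \<otimes> (x \<otimes> y) = y"
  by (simp add: m_assoc[symmetric])
lemma canc2 [simp]: "x \<in> carrier G \<Longrightarrow> y \<in> carrier G \<Longrightarrow> x \<otimes> (inv x \<otimes> y) = y"
  by (simp add: m_assoc[symmetric])

lemmas gsimps = m_assoc inv_mult_group cm_def

lemma cm_closed [simp]: "a \<in> carrier G \<Longrightarrow> b \<in> carrier G \<Longrightarrow> cm G a b \<in> carrier G"
  by (simp add: cm_def)

lemma cm_inv: "a \<in> carrier G \<Longrightarrow> b \<in> carrier G \<Longrightarrow> inv (cm G a b) = cm G b a"
  by (simp add: gsimps)

lemma cm_mult_left: "a \<in> carrier G \<Longrightarrow> a' \<in> carrier G \<Longrightarrow> b \<in> carrier G \<Longrightarrow>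
   cm G (a \<otimes> a') b = inv a' \<otimes> cm G a b \<otimes> a' \<otimes> cm G a' b"
  by (simp add: gsimps)

lemma cm_mult_right: "a \<in> carrier G \<Longrightarrow> b' \<in> carrier G \<Longrightarrow> b \<in> carrier G \<Longrightarrow>
   cm G a (b \<otimes> b') = cm G a b' \<otimes> inv b' \<otimes> cm G a b \<otimes> b'"
  by (simp add: gsimps)

lemma cm_conj: "u \<in> carrier G \<Longrightarrow> a \<in> carrier G \<Longrightarrow> inv a \<otimes> u \<otimes> a = u \<otimes> cm G u a"
  by (simp add: gsimps)

lemma cm_one_left [simp]: "a \<in> carrier G \<Longrightarrow> cm G \<one> a = \<one>"
  by (simp add: gsimps)

lemma hall_witt: "x \<in> carrier G \<Longrightarrow> y \<in> carrier G \<Longrightarrow> z \<in> carrier G \<Longrightarrow>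
  (inv y \<otimes> cm G (cm G x (inv y)) z \<otimes> y) \<otimes> (inv z \<otimes> cm G (cm G y (inv z)) x \<otimes> z)
   \<otimes> (inv x \<otimes> cm G (cm G z (inv x)) y \<otimes> x) = \<one>"
  by (simp add: gsimps)

end


context group begin

lemma cs_eq: "comm_subgroup G H K = generate G {cm G a b | a b. a \<in> H \<and> b \<in> K}"
  unfolding comm_subgroup_def cm_def by simp

lemma cs_subgroup: "H \<subseteq> carrier G \<Longrightarrow> K \<subseteq> carrier G \<Longrightarrow> subgroup (comm_subgroup G H K) G"
  unfolding cs_eq by (rule generate_is_subgroup) (auto intro!: cm_closed)

lemma cs_gen: "a \<in> H \<Longrightarrow> b \<in> K \<Longrightarrow> cm G a b \<in> comm_subgroup G H K"
  unfolding cs_eq by (rule generate.incl) auto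

lemma cs_min: "subgroup N G \<Longrightarrow> H \<subseteq> carrier G \<Longrightarrow> K \<subseteq> carrier G \<Longrightarrow>
   (\<And>a b. a \<in> H \<Longrightarrow> b \<in> K \<Longrightarrow> cm G a b \<in> N) \<Longrightarrow> comm_subgroup G H K \<subseteq> N"
  unfolding cs_eq by (rule generate_subgroup_incl) (auto intro!: cm_closed)

lemma cs_mono: "H \<subseteq> H' \<Longrightarrow> K \<subseteq> K' \<Longrightarrow> comm_subgroup G H K \<subseteq> comm_subgroup G H' K'"
  unfolding cs_eq by (rule mono_generate) auto

lemma cs_normal: assumes "H \<lhd> G" shows "comm_subgroup G H (carrier G) \<lhd> G"
proof -
  have Hc: "H \<subseteq> carrier G" using assms normal_imp_subgroup subgroup.subset by blast
  show ?thesis unfolding cs_eq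
  proof (rule normal_generateI)
    show "{cm G a b |a b. a \<in> H \<and> b \<in> carrier G} \<subseteq> carrier G" using Hc by (auto intro!: cm_closed)
  next
    fix h g assume h: "h \<in> {cm G a b |a b. a \<in> H \<and> b \<in> carrier G}" and g: "g \<in> carrier G"
    then obtain a b where ab: "h = cm G a b" "a \<in> H" "b \<in> carrier G" by auto
    have ac: "a \<in> carrier G" using ab Hc by auto
    have "g \<otimes> cm G a b \<otimes> inv g = cm G (g \<otimes> a \<otimes> inv g) (g \<otimes> b \<otimes> inv g)"
      using ab(3) ac g by (simp add: gsimps)
    moreover have "g \<otimes> a \<otimes> inv g \<in> H" by (rule normal.inv_op_closed2[OF assms g ab(2)])
    moreover have "g \<otimes> b \<otimes> inv g \<in> carrier G" using ab g by simp
    ultimately show "g \<otimes> h \<otimes> inv g \<in> {cm G a b |a b. a \<in> H \<and> b \<in> carrier G}"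
      unfolding ab(1) by blast
  qed
qed

lemma cs_sub: assumes "H \<lhd> G" shows "comm_subgroup G H (carrier G) \<subseteq> H"
proof (rule cs_min)
  show "subgroup H G" using assms normal_imp_subgroup by blast
  then show Hc: "H \<subseteq> carrier G" using subgroup.subset by blast
  show "carrier G \<subseteq> carrier G" by simp
  fix a b assume a: "a \<in> H" and b: "b \<in> carrier G"
  have ac: "a \<in> carrier G" using a Hc by auto
  have "cm G a b = inv a \<otimes> (inv b \<otimes> a \<otimes> b)" using ac b by (simp add: gsimps)
  moreover have "inv b \<otimes> a \<otimes> b \<in> H" by (rule normal.inv_op_closed1[OF assms b a])
  moreover have "inv a \<in> H" by (rule subgroup.m_inv_closed[OF \<open>subgroup H G\<close> a])
  ultimately show "cm G a b \<in> H" using subgroup.m_closed[OF \<open>subgroup H G\<close>] by simp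
qed

lemma lcs_normal': "lcs G k \<lhd> G"
proof (induction k rule: nat_less_induct)
  case (1 n)
  show ?case
  proof (cases n)
    case 0 then show ?thesis by (simp add: normal_self)
  next
    case (Suc m) then show ?thesis
    proof (cases m)
      case 0 then show ?thesis using Suc by (simp add: normal_self)
    next
      case (Suc k)
      have "lcs G (Suc k) \<lhd> G" using 1 `n = Suc m` Suc by simp
      then show ?thesis using `n = Suc m` Suc cs_normal by simp
    qed
  qed
qed

end


context group begin

lemma sub_pow: "subgroup H G \<Longrightarrow> x \<in> H \<Longrightarrow> x [^] (n::nat) \<in> H"
  by (induction n) (auto simp: subgroup.one_closed subgroup.m_closed)

lemma normal_sub: "H \<lhd> G \<Longrightarrow> subgroup H G"
  by (rule normal_imp_subgroup)

lemma normal_subset: "H \<lhd> G \<Longrightarrow> H \<subseteq> carrier G"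
  using normal_imp_subgroup subgroup.subset by blast

lemma lcs_normal: "lcs G k \<lhd> G" by (rule lcs_normal')

lemma lcs_Suc_sub: "lcs G (Suc k) \<subseteq> lcs G k"
proof (cases k)
  case 0 then show ?thesis by simp
next
  case (Suc j) then show ?thesis using cs_sub[OF lcs_normal[of "Suc j"]] by simp
qed

lemma lcs_antimono: "j \<le> k \<Longrightarrow> lcs G k \<subseteq> lcs G j"
proof (induction k)
  case 0 then show ?case by simp
next
  case (Suc k) then show ?case using lcs_Suc_sub[of k] by (cases "j = Suc k") auto
qed

lemma lcs_iter: "lcs G (Suc c) = iter_comm G (carrier G) c"
  by (induction c) auto

lemma iter_normal: "R \<lhd> G \<Longrightarrow> iter_comm G R i \<lhd> G"
  by (induction i) (auto intro: cs_normal)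

lemma iter_mono: "R \<subseteq> R' \<Longrightarrow> iter_comm G R i \<subseteq> iter_comm G R' i"
proof (induction i)
  case 0 then show ?case by simp
next
  case (Suc i) then show ?case using cs_mono[OF Suc.IH subset_refl[of "carrier G"]] by simp
qed

lemma iter_shift: "iter_comm G R (Suc i) = iter_comm G (comm_subgroup G R (carrier G)) i"
  by (induction i) auto

lemma iter_Suc_sub: "R \<lhd> G \<Longrightarrow> iter_comm G R (Suc i) \<subseteq> iter_comm G R i"
  using cs_sub[OF iter_normal] by simp

lemma cm_one_comm: "a \<in> carrier G \<Longrightarrow> b \<in> carrier G \<Longrightarrow> cm G a b = \<one> \<Longrightarrow> a \<otimes> b = b \<otimes> a"
proof -
  assume a: "a \<in> carrier G" and b: "b \<in> carrier G" and c: "cm G a b = \<one>"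
  have "a \<otimes> b = b \<otimes> a \<otimes> cm G a b" using a b by (simp add: gsimps)
  then show ?thesis using c a b by simp
qed

lemma quot_one_iff: assumes N: "N \<lhd> G" and x: "x \<in> carrier G"
  shows "(N #> x = \<one>\<^bsub>G Mod N\<^esub>) \<longleftrightarrow> x \<in> N"
proof
  assume "N #> x = \<one>\<^bsub>G Mod N\<^esub>"
  then have "N #> x = N" by simp
  moreover have "x \<in> N #> x" using rcos_self[OF x normal_sub[OF N]] .
  ultimately show "x \<in> N" by simp
next
  assume "x \<in> N" then show "N #> x = \<one>\<^bsub>G Mod N\<^esub>" using coset_join2[OF x normal_sub[OF N]] by simp
qed

end

lemma hom_cm: assumes "group G" "group H" "h \<in> hom G H" "a \<in> carrier G" "b \<in> carrier G"
  shows "h (cm G a b) = cm H (h a) (h b)"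
proof -
  interpret group_hom G H h using assms by (simp add: group_hom_def group_hom_axioms_def)
  show ?thesis using assms(4,5) by (simp add: cm_def)
qed



context group begin

lemma step_lemma:
  fixes e :: nat
  assumes Y: "Y \<lhd> G" and N: "N \<lhd> G"
    and cen: "\<And>u g. u \<in> comm_subgroup G Y (carrier G) \<Longrightarrow> g \<in> carrier G \<Longrightarrow> cm G u g \<in> N"
    and opt: "(\<forall>y\<in>Y. \<forall>b\<in>carrier G. cm G (y [^] e) b \<in> N) \<or> (\<forall>y\<in>Y. \<forall>b\<in>carrier G. cm G y (b [^] e) \<in> N)"
    and x: "x \<in> comm_subgroup G Y (carrier G)"
  shows "x [^] e \<in> N"
proof -
  define Q where "Q = G Mod N"
  define h where "h = (\<lambda>a. N #> a)"
  define XX where "XX = comm_subgroup G Y (carrier G)"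
  have Qg: "group Q" unfolding Q_def using N normal.factorgroup_is_group by blast
  have hh: "h \<in> hom G Q" unfolding h_def Q_def using N normal.r_coset_hom_Mod by blast
  interpret Q: group Q by (rule Qg)
  interpret hg: group_hom G Q h using hh Qg by (simp add: group_hom_def group_hom_axioms_def is_group)
  have Yc: "Y \<subseteq> carrier G" using Y normal_subset by blast
  have Xc: "XX \<subseteq> carrier G" unfolding XX_def using cs_subgroup[OF Yc] subgroup.subset by blast
  have one_iff: "\<And>z. z \<in> carrier G \<Longrightarrow> h z = \<one>\<^bsub>Q\<^esub> \<longleftrightarrow> z \<in> N"
    unfolding h_def Q_def using quot_one_iff[OF N] by blast
  have hcm: "\<And>a b. a \<in> carrier G \<Longrightarrow> b \<in> carrier G \<Longrightarrow> h (cm G a b) = cm Q (h a) (h b)"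
    using hom_cm[OF is_group Qg hh] by blast
  have central: "\<And>u g. u \<in> XX \<Longrightarrow> g \<in> carrier G \<Longrightarrow> h u \<otimes>\<^bsub>Q\<^esub> h g = h g \<otimes>\<^bsub>Q\<^esub> h u"
  proof -
    fix u g assume u: "u \<in> XX" and g: "g \<in> carrier G"
    have uc: "u \<in> carrier G" using u Xc by auto
    have "h (cm G u g) = \<one>\<^bsub>Q\<^esub>" using one_iff cen[OF u[unfolded XX_def] g] uc g by simp
    then have "cm Q (h u) (h g) = \<one>\<^bsub>Q\<^esub>" using hcm uc g by simp
    then show "h u \<otimes>\<^bsub>Q\<^esub> h g = h g \<otimes>\<^bsub>Q\<^esub> h u" using Q.cm_one_comm uc g by simp
  qed
  have genX: "\<And>y b. y \<in> Y \<Longrightarrow> b \<in> carrier G \<Longrightarrow> cm G y b \<in> XX"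
    unfolding XX_def by (rule cs_gen) auto
  have Ypow: "\<And>y n. y \<in> Y \<Longrightarrow> y [^] (n::nat) \<in> Y" using sub_pow[OF normal_sub[OF Y]] by blast
  have linL: "\<And>y b n. y \<in> Y \<Longrightarrow> b \<in> carrier G \<Longrightarrow> h (cm G (y [^] (n::nat)) b) = h (cm G y b) [^]\<^bsub>Q\<^esub> n"
  proof -
    fix y b assume y: "y \<in> Y" and b: "b \<in> carrier G"
    have yc: "y \<in> carrier G" using y Yc by auto
    fix n show "h (cm G (y [^] (n::nat)) b) = h (cm G y b) [^]\<^bsub>Q\<^esub> n"
    proof (induction n)
      case 0 then show ?case using b by simp
    next
      case (Suc n)
      have ync: "y [^] n \<in> carrier G" using yc by simp
      have "cm G (y [^] Suc n) b = inv y \<otimes> cm G (y [^] n) b \<otimes> y \<otimes> cm G y b"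
        using cm_mult_left[OF ync yc b] by simp
      then have "h (cm G (y [^] Suc n) b) = inv\<^bsub>Q\<^esub> (h y) \<otimes>\<^bsub>Q\<^esub> h (cm G (y [^] n) b) \<otimes>\<^bsub>Q\<^esub> h y \<otimes>\<^bsub>Q\<^esub> h (cm G y b)"
        using ync yc b by simp
      also have "h (cm G (y [^] n) b) \<otimes>\<^bsub>Q\<^esub> h y = h y \<otimes>\<^bsub>Q\<^esub> h (cm G (y [^] n) b)"
        using central[OF genX[OF Ypow[OF y] b] yc] .
      then have "inv\<^bsub>Q\<^esub> (h y) \<otimes>\<^bsub>Q\<^esub> h (cm G (y [^] n) b) \<otimes>\<^bsub>Q\<^esub> h y = h (cm G (y [^] n) b)"
        using ync yc b by (simp add: Q.m_assoc)
      finally show ?case using Suc ync yc b by simp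
    qed
  qed
  have linR: "\<And>y b n. y \<in> Y \<Longrightarrow> b \<in> carrier G \<Longrightarrow> h (cm G y (b [^] (n::nat))) = h (cm G y b) [^]\<^bsub>Q\<^esub> n"
  proof -
    fix y b assume y: "y \<in> Y" and b: "b \<in> carrier G"
    have yc: "y \<in> carrier G" using y Yc by auto
    fix n show "h (cm G y (b [^] (n::nat))) = h (cm G y b) [^]\<^bsub>Q\<^esub> n"
    proof (induction n)
      case 0 then show ?case using yc by (simp add: cm_def)
    next
      case (Suc n)
      have bnc: "b [^] n \<in> carrier G" using b by simp
      have "cm G y (b [^] Suc n) = cm G y b \<otimes> inv b \<otimes> cm G y (b [^] n) \<otimes> b"
        using cm_mult_right[OF yc b bnc] by simp
      then have "h (cm G y (b [^] Suc n)) = h (cm G y b) \<otimes>\<^bsub>Q\<^esub> inv\<^bsub>Q\<^esub> (h b) \<otimes>\<^bsub>Q\<^esub> h (cm G y (b [^] n)) \<otimes>\<^bsub>Q\<^esub> h b"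
        using bnc yc b by simp
      also have "h (cm G y (b [^] n)) \<otimes>\<^bsub>Q\<^esub> h b = h b \<otimes>\<^bsub>Q\<^esub> h (cm G y (b [^] n))"
        using central[OF genX[OF y bnc] b] .
      then have "h (cm G y b) \<otimes>\<^bsub>Q\<^esub> inv\<^bsub>Q\<^esub> (h b) \<otimes>\<^bsub>Q\<^esub> h (cm G y (b [^] n)) \<otimes>\<^bsub>Q\<^esub> h b = h (cm G y b) \<otimes>\<^bsub>Q\<^esub> h (cm G y (b [^] n))"
        using bnc yc b by (simp add: Q.m_assoc)
      also have "\<dots> = h (cm G y (b [^] n)) \<otimes>\<^bsub>Q\<^esub> h (cm G y b)"
        using central[OF genX[OF y bnc] cm_closed[OF yc b]] by simp
      finally show ?case using Suc bnc yc b by simp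
    qed
  qed
  have gens: "\<And>y b. y \<in> Y \<Longrightarrow> b \<in> carrier G \<Longrightarrow> h (cm G y b) [^]\<^bsub>Q\<^esub> e = \<one>\<^bsub>Q\<^esub>"
  proof -
    fix y b assume y: "y \<in> Y" and b: "b \<in> carrier G"
    have yc: "y \<in> carrier G" using y Yc by auto
    from opt show "h (cm G y b) [^]\<^bsub>Q\<^esub> e = \<one>\<^bsub>Q\<^esub>"
    proof
      assume "\<forall>y\<in>Y. \<forall>b\<in>carrier G. cm G (y [^] e) b \<in> N"
      then have "cm G (y [^] e) b \<in> N" using y b by blast
      then have "h (cm G (y [^] e) b) = \<one>\<^bsub>Q\<^esub>" using one_iff yc b by simp
      then show ?thesis using linL[OF y b, of e] by simp
    next
      assume "\<forall>y\<in>Y. \<forall>b\<in>carrier G. cm G y (b [^] e) \<in> N"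
      then have "cm G y (b [^] e) \<in> N" using y b by blast
      then have "h (cm G y (b [^] e)) = \<one>\<^bsub>Q\<^esub>" using one_iff yc b by simp
      then show ?thesis using linR[OF y b, of e] by simp
    qed
  qed
  have "x \<in> carrier G \<and> h x [^]\<^bsub>Q\<^esub> e = \<one>\<^bsub>Q\<^esub>"
    using x unfolding cs_eq
  proof (induction x rule: generate.induct)
    case one then show ?case by simp
  next
    case (incl z)
    then obtain y b where "z = cm G y b" "y \<in> Y" "b \<in> carrier G" by blast
    then show ?case using gens Yc by auto
  next
    case (inv z)
    then obtain y b where yb: "z = cm G y b" "y \<in> Y" "b \<in> carrier G" by blast
    then have zc: "z \<in> carrier G" using Yc by auto
    have "h (inv z) [^]\<^bsub>Q\<^esub> e = inv\<^bsub>Q\<^esub> (h z [^]\<^bsub>Q\<^esub> e)"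
      using zc by (simp add: Q.nat_pow_inv)
    then show ?case using gens yb zc by simp
  next
    case (eng z1 z2)
    have z1XX: "z1 \<in> XX" unfolding XX_def cs_eq using eng(1) .
    have "h (z1 \<otimes> z2) [^]\<^bsub>Q\<^esub> e = (h z1 \<otimes>\<^bsub>Q\<^esub> h z2) [^]\<^bsub>Q\<^esub> e" using eng by simp
    also have "\<dots> = h z1 [^]\<^bsub>Q\<^esub> e \<otimes>\<^bsub>Q\<^esub> h z2 [^]\<^bsub>Q\<^esub> e"
      using Q.pow_mult_distrib[OF central[OF z1XX] ] eng by simp
    finally show ?case using eng by simp
  qed
  then have xc: "x \<in> carrier G" and hx: "h x [^]\<^bsub>Q\<^esub> e = \<one>\<^bsub>Q\<^esub>" by auto
  have "h (x [^] e) = h x [^]\<^bsub>Q\<^esub> e" using xc by (rule hg.hom_nat_pow)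
  then have "h (x [^] e) = \<one>\<^bsub>Q\<^esub>" using hx by simp
  then show ?thesis using one_iff xc by simp
qed

end


context group begin

lemma iter_S_R: assumes "comm_subgroup G S (carrier G) \<subseteq> R"
  shows "iter_comm G S (Suc i) \<subseteq> iter_comm G R i"
  using iter_shift[of S i] iter_mono[OF assms, of i] by simp

lemma Qlemma:
  fixes e :: nat
  assumes S: "S \<lhd> G" and R: "R \<lhd> G" and SR: "comm_subgroup G S (carrier G) \<subseteq> R"
    and opt: "(\<forall>s\<in>S. s [^] e \<in> R) \<or>
              ((\<forall>b\<in>carrier G. b [^] e \<in> S) \<and> (\<forall>s\<in>S. \<forall>s'\<in>S. cm G s s' \<in> comm_subgroup G R (carrier G)))"
  shows "\<forall>a\<in>iter_comm G S (Suc j). a [^] e \<in> iter_comm G R (Suc j)"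
proof (induction j)
  case 0
  have Sc: "S \<subseteq> carrier G" using S normal_subset by blast
  show ?case
  proof
    fix a assume a: "a \<in> iter_comm G S (Suc 0)"
    have "a [^] e \<in> comm_subgroup G R (carrier G)"
    proof (rule step_lemma[OF S cs_normal[OF R]])
      show "a \<in> comm_subgroup G S (carrier G)" using a by simp
    next
      fix u g assume u: "u \<in> comm_subgroup G S (carrier G)" and g: "g \<in> carrier G"
      show "cm G u g \<in> comm_subgroup G R (carrier G)" using cs_gen[OF subsetD[OF SR u] g] .
    next
      show "(\<forall>y\<in>S. \<forall>b\<in>carrier G. cm G (y [^] e) b \<in> comm_subgroup G R (carrier G)) \<or>
            (\<forall>y\<in>S. \<forall>b\<in>carrier G. cm G y (b [^] e) \<in> comm_subgroup G R (carrier G))"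
        using opt cs_gen by blast
    qed
    then show "a [^] e \<in> iter_comm G R (Suc 0)" by simp
  qed
next
  case (Suc j)
  show ?case
  proof
    fix a assume a: "a \<in> iter_comm G S (Suc (Suc j))"
    have "a [^] e \<in> comm_subgroup G (iter_comm G R (Suc j)) (carrier G)"
    proof (rule step_lemma[OF iter_normal[OF S] cs_normal[OF iter_normal[OF R]]])
      show "a \<in> comm_subgroup G (iter_comm G S (Suc j)) (carrier G)" using a by simp
    next
      fix u g assume u: "u \<in> comm_subgroup G (iter_comm G S (Suc j)) (carrier G)" and g: "g \<in> carrier G"
      have "u \<in> iter_comm G S (Suc (Suc j))" using u by simp
      then have "u \<in> iter_comm G R (Suc j)" using iter_S_R[OF SR, of "Suc j"] by blast
      then show "cm G u g \<in> comm_subgroup G (iter_comm G R (Suc j)) (carrier G)" using cs_gen g by blast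
    next
      show "(\<forall>y\<in>iter_comm G S (Suc j). \<forall>b\<in>carrier G. cm G (y [^] e) b \<in> comm_subgroup G (iter_comm G R (Suc j)) (carrier G)) \<or>
            (\<forall>y\<in>iter_comm G S (Suc j). \<forall>b\<in>carrier G. cm G y (b [^] e) \<in> comm_subgroup G (iter_comm G R (Suc j)) (carrier G))"
        using Suc.IH cs_gen by blast
    qed
    then show "a [^] e \<in> iter_comm G R (Suc (Suc j))" by simp
  qed
qed

lemma three_sub:
  assumes A: "A \<lhd> G" and B: "B \<lhd> G" and AB: "comm_subgroup G A (carrier G) \<subseteq> B"
    and a: "a \<in> A" and w: "w \<in> lcs G 2"
  shows "cm G w a \<in> comm_subgroup G B (carrier G)"
proof -
  define N where "N = comm_subgroup G B (carrier G)"
  have N: "N \<lhd> G" unfolding N_def by (rule cs_normal[OF B])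
  have Nsub: "subgroup N G" by (rule normal_sub[OF N])
  have Ac: "A \<subseteq> carrier G" using A normal_subset by blast
  have Bc: "B \<subseteq> carrier G" using B normal_subset by blast
  have ac: "a \<in> carrier G" using a Ac by auto
  have inN1: "\<And>x z. x \<in> A \<Longrightarrow> z \<in> carrier G \<Longrightarrow> y \<in> carrier G \<Longrightarrow> cm G (cm G x z) y \<in> N"
    unfolding N_def using AB cs_gen by blast
  have base: "\<And>x y. x \<in> carrier G \<Longrightarrow> y \<in> carrier G \<Longrightarrow> cm G (cm G x y) a \<in> N"
  proof -
    fix x y assume x: "x \<in> carrier G" and y: "y \<in> carrier G"
    define y' where "y' = inv y"
    have y'c: "y' \<in> carrier G" unfolding y'_def using y by simp
    have yy: "inv y' = y" unfolding y'_def using y by simp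
    define t1 where "t1 = inv y' \<otimes> cm G (cm G x (inv y')) a \<otimes> y'"
    define t2 where "t2 = inv a \<otimes> cm G (cm G y' (inv a)) x \<otimes> a"
    define t3 where "t3 = inv x \<otimes> cm G (cm G a (inv x)) y' \<otimes> x"
    have hw: "t1 \<otimes> t2 \<otimes> t3 = \<one>" unfolding t1_def t2_def t3_def using hall_witt[OF x y'c ac] .
    have c2: "cm G y' (inv a) \<in> B"
    proof -
      have "inv a \<in> A" by (rule subgroup.m_inv_closed[OF normal_sub[OF A] a])
      then have "cm G (inv a) y' \<in> comm_subgroup G A (carrier G)"
        using cs_gen[of "inv a" A y' "carrier G"] y'c by blast
      then have "cm G (inv a) y' \<in> B" using AB by blast
      then have "inv (cm G (inv a) y') \<in> B" by (rule subgroup.m_inv_closed[OF normal_sub[OF B]])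
      then show ?thesis using cm_inv ac y'c by simp
    qed
    have c3: "cm G a (inv x) \<in> B" using AB cs_gen[OF a, of "inv x" "carrier G"] x by auto
    have t2N: "t2 \<in> N" unfolding t2_def
      using normal.inv_op_closed1[OF N ac] cs_gen[OF c2 x] unfolding N_def by blast
    have t3N: "t3 \<in> N" unfolding t3_def
      using normal.inv_op_closed1[OF N x] cs_gen[OF c3 y'c] unfolding N_def by blast
    have t1c: "t1 \<in> carrier G" unfolding t1_def using x y'c ac by simp
    have t2c: "t2 \<in> carrier G" using t2N normal_subset[OF N] by blast
    have t3c: "t3 \<in> carrier G" using t3N normal_subset[OF N] by blast
    have "t1 = inv (t2 \<otimes> t3)"
    proof -
      have "t1 \<otimes> (t2 \<otimes> t3) = \<one>" using hw t1c t2c t3c by (simp add: m_assoc)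
      then show ?thesis using inv_equality[of t1 "t2 \<otimes> t3"] t1c t2c t3c by simp
    qed
    then have t1N: "t1 \<in> N" using subgroup.m_inv_closed[OF Nsub subgroup.m_closed[OF Nsub t2N t3N]] by simp
    have "cm G (cm G x y) a = y' \<otimes> t1 \<otimes> inv y'" unfolding t1_def yy unfolding y'_def using x y ac by (simp add: m_assoc)
    then show "cm G (cm G x y) a \<in> N" using normal.inv_op_closed2[OF N y'c t1N] by simp
  qed
  have "w \<in> carrier G \<and> cm G w a \<in> N" using w unfolding numeral_2_eq_2 lcs.simps cs_eq
  proof (induction w rule: generate.induct)
    case one then show ?case using ac subgroup.one_closed[OF Nsub] by simp
  next
    case (incl z)
    then obtain x y where "z = cm G x y" "x \<in> carrier G" "y \<in> carrier G" by blast
    then show ?case using base by simp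
  next
    case (inv z)
    then obtain x y where xy: "z = cm G x y" "x \<in> carrier G" "y \<in> carrier G" by blast
    then show ?case using base[of y x] cm_inv by simp
  next
    case (eng z1 z2)
    then have c: "z1 \<in> carrier G" "z2 \<in> carrier G" by auto
    have "cm G (z1 \<otimes> z2) a = inv z2 \<otimes> cm G z1 a \<otimes> z2 \<otimes> cm G z2 a" using cm_mult_left[OF c ac] .
    moreover have "inv z2 \<otimes> cm G z1 a \<otimes> z2 \<in> N" using normal.inv_op_closed1[OF N c(2)] eng by blast
    ultimately show ?case using eng c subgroup.m_closed[OF Nsub] by simp
  qed
  then show ?thesis unfolding N_def by simp
qed

end


definition pre :: "('a,'b) monoid_scheme \<Rightarrow> ('c,'d) monoid_scheme \<Rightarrow> ('a\<Rightarrow>'c) \<Rightarrow> nat \<Rightarrow> 'a set" where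
  "pre G H \<phi> k = {x\<in>carrier G. \<phi> x \<in> lcs H k}"

locale hsetup = G: group G + H: group H for G :: "('a,'b) monoid_scheme" and H :: "('c,'d) monoid_scheme" +
  fixes \<phi> assumes hom: "\<phi> \<in> hom G H"
begin

sublocale hg: group_hom G H \<phi> using hom by (simp add: group_hom_def group_hom_axioms_def G.is_group H.is_group)

abbreviation T where "T k \<equiv> pre G H \<phi> k"

lemma T_normal: "T k \<lhd> G"
proof (rule G.normal_invI)
  have L: "subgroup (lcs H k) H" using H.normal_sub[OF H.lcs_normal] .
  show "subgroup (T k) G"
  proof (rule G.subgroupI)
    show "T k \<subseteq> carrier G" unfolding pre_def by auto
    show "T k \<noteq> {}" unfolding pre_def using subgroup.one_closed[OF L] by auto
    fix a assume a: "a \<in> T k"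
    then show "inv\<^bsub>G\<^esub> a \<in> T k" unfolding pre_def using subgroup.m_inv_closed[OF L] by auto
    fix b assume b: "b \<in> T k"
    then show "a \<otimes>\<^bsub>G\<^esub> b \<in> T k" using a unfolding pre_def using subgroup.m_closed[OF L] by auto
  qed
  fix x h assume x: "x \<in> carrier G" and h: "h \<in> T k"
  then show "x \<otimes>\<^bsub>G\<^esub> h \<otimes>\<^bsub>G\<^esub> inv\<^bsub>G\<^esub> x \<in> T k" unfolding pre_def
    using normal.inv_op_closed2[OF H.lcs_normal] by auto
qed

lemma T_cs: assumes "k \<ge> 1" shows "comm_subgroup G (T k) (carrier G) \<subseteq> T (Suc k)"
proof (rule G.cs_min)
  show "subgroup (T (Suc k)) G" using G.normal_sub[OF T_normal] .
  show "T k \<subseteq> carrier G" unfolding pre_def by auto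
  show "carrier G \<subseteq> carrier G" by simp
  fix a b assume a: "a \<in> T k" and b: "b \<in> carrier G"
  obtain k' where k': "k = Suc k'" using assms by (cases k) auto
  have ac: "a \<in> carrier G" using a unfolding pre_def by auto
  have "\<phi> (cm G a b) = cm H (\<phi> a) (\<phi> b)" using hom_cm[OF G.is_group H.is_group hom ac b] .
  moreover have "cm H (\<phi> a) (\<phi> b) \<in> comm_subgroup H (lcs H k) (carrier H)"
    using H.cs_gen a b unfolding pre_def by auto
  ultimately show "cm G a b \<in> T (Suc k)" unfolding pre_def using k' ac b by simp
qed

lemma ker_T: "kernel G H \<phi> \<subseteq> T k"
  unfolding pre_def kernel_def using subgroup.one_closed[OF H.normal_sub[OF H.lcs_normal]] by auto

lemma T_anti: "j \<le> k \<Longrightarrow> T k \<subseteq> T j"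
  unfolding pre_def using H.lcs_antimono by blast

lemma T_1: "T (Suc 0) = carrier G" unfolding pre_def by auto

lemma T_top: "lcs H (Suc t) = {\<one>\<^bsub>H\<^esub>} \<Longrightarrow> T (Suc t) = kernel G H \<phi>"
  unfolding pre_def kernel_def by auto

lemma T2_decomp: assumes surj: "\<phi> ` carrier G = carrier H" and y: "y \<in> T 2"
  shows "\<exists>g\<in>lcs G 2. \<exists>r\<in>kernel G H \<phi>. y = g \<otimes>\<^bsub>G\<^esub> r"
proof -
  have sub: "subgroup (\<phi> ` lcs G 2) H"
    using hg.subgroup_img_is_subgroup[OF G.normal_sub[OF G.lcs_normal]] .
  have l2: "\<And>K. lcs K 2 = comm_subgroup K (carrier K) (carrier K)" by (simp add: numeral_2_eq_2)
  have "comm_subgroup H (carrier H) (carrier H) \<subseteq> \<phi> ` lcs G 2"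
  proof (rule H.cs_min)
    show "subgroup (\<phi> ` lcs G 2) H" using sub .
    show "carrier H \<subseteq> carrier H" by simp
    show "carrier H \<subseteq> carrier H" by simp
    fix a b assume a: "a \<in> carrier H" and b: "b \<in> carrier H"
    obtain a' where a': "a' \<in> carrier G" "a = \<phi> a'" using a surj by (metis imageE)
    obtain b' where b': "b' \<in> carrier G" "b = \<phi> b'" using b surj by (metis imageE)
    have "cm G a' b' \<in> lcs G 2" unfolding l2 using G.cs_gen a'(1) b'(1) by simp
    moreover have "\<phi> (cm G a' b') = cm H a b" using hom_cm[OF G.is_group H.is_group hom a'(1) b'(1)] a' b' by simp
    ultimately show "cm H a b \<in> \<phi> ` lcs G 2" by (metis imageI)
  qed
  then have "lcs H 2 \<subseteq> \<phi> ` lcs G 2" unfolding l2 .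
  moreover have yc: "y \<in> carrier G" and "\<phi> y \<in> lcs H 2" using y unfolding pre_def by auto
  ultimately obtain g where g: "g \<in> lcs G 2" "\<phi> g = \<phi> y" by (metis imageE subsetD)
  have gc: "g \<in> carrier G" using g(1) G.normal_subset[OF G.lcs_normal] by blast
  define r where "r = inv\<^bsub>G\<^esub> g \<otimes>\<^bsub>G\<^esub> y"
  have rc: "r \<in> carrier G" unfolding r_def using gc yc by simp
  have "\<phi> r = \<one>\<^bsub>H\<^esub>" unfolding r_def using gc yc g(2) by simp
  then have "r \<in> kernel G H \<phi>" unfolding kernel_def using rc by simp
  moreover have "y = g \<otimes>\<^bsub>G\<^esub> r" unfolding r_def using gc yc by (simp add: G.m_assoc[symmetric])
  ultimately show ?thesis using g(1) by blast
qed

lemma T_opt2: assumes surj: "\<phi> ` carrier G = carrier H" and k: "k \<ge> 2"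
    and s: "s \<in> T k" and s': "s' \<in> T k"
  shows "cm G s s' \<in> comm_subgroup G (T (Suc k)) (carrier G)"
proof -
  define N where "N = comm_subgroup G (T (Suc k)) (carrier G)"
  have N: "N \<lhd> G" unfolding N_def using G.cs_normal[OF T_normal] .
  have Nsub: "subgroup N G" using G.normal_sub[OF N] .
  have sc: "s \<in> carrier G" using s unfolding pre_def by auto
  have "s' \<in> T 2" using T_anti[OF k] s' by blast
  then obtain g r where g: "g \<in> lcs G 2" and r: "r \<in> kernel G H \<phi>" and sgr: "s' = g \<otimes>\<^bsub>G\<^esub> r"
    using T2_decomp[OF surj] by blast
  have gc: "g \<in> carrier G" using g G.normal_subset[OF G.lcs_normal] by blast
  have rc: "r \<in> carrier G" using r unfolding kernel_def by auto
  have c1: "cm G s (g \<otimes>\<^bsub>G\<^esub> r) = cm G s r \<otimes>\<^bsub>G\<^esub> inv\<^bsub>G\<^esub> r \<otimes>\<^bsub>G\<^esub> cm G s g \<otimes>\<^bsub>G\<^esub> r"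
    using G.cm_mult_right[OF sc rc gc] .
  have "cm G r s \<in> N" unfolding N_def using G.cs_gen[OF subsetD[OF ker_T r] sc] .
  then have "inv\<^bsub>G\<^esub> (cm G r s) \<in> N" by (rule subgroup.m_inv_closed[OF Nsub])
  then have n1: "cm G s r \<in> N" using G.cm_inv[OF rc sc] by simp
  have k1: "k \<ge> 1" using k by simp
  have "cm G g s \<in> N" unfolding N_def
    using G.three_sub[OF T_normal T_normal T_cs[OF k1] s g] .
  then have "inv\<^bsub>G\<^esub> (cm G g s) \<in> N" by (rule subgroup.m_inv_closed[OF Nsub])
  then have "cm G s g \<in> N" using G.cm_inv[OF gc sc] by simp
  then have n2: "inv\<^bsub>G\<^esub> r \<otimes>\<^bsub>G\<^esub> cm G s g \<otimes>\<^bsub>G\<^esub> r \<in> N" using normal.inv_op_closed1[OF N rc] by blast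
  have "cm G s r \<otimes>\<^bsub>G\<^esub> (inv\<^bsub>G\<^esub> r \<otimes>\<^bsub>G\<^esub> cm G s g \<otimes>\<^bsub>G\<^esub> r) \<in> N"
    using subgroup.m_closed[OF Nsub n1 n2] .
  moreover have "cm G s r \<otimes>\<^bsub>G\<^esub> (inv\<^bsub>G\<^esub> r \<otimes>\<^bsub>G\<^esub> cm G s g \<otimes>\<^bsub>G\<^esub> r) = cm G s s'"
    unfolding sgr c1 using sc rc gc by (simp add: G.m_assoc)
  ultimately show ?thesis unfolding N_def by simp
qed

end


context hsetup begin

lemma chain:
  fixes n0 :: nat and e :: "nat \<Rightarrow> nat" and c t :: nat
  assumes c: "c \<ge> 1" and surj: "\<phi> ` carrier G = carrier H"
    and hn0: "\<forall>f\<in>carrier G. f [^]\<^bsub>G\<^esub> n0 \<in> T 2"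
    and he: "\<forall>j\<in>{1..t-1}. (\<forall>s\<in>T (Suc j). s [^]\<^bsub>G\<^esub> e j \<in> T (Suc (Suc j))) \<or> (\<forall>b\<in>carrier G. b [^]\<^bsub>G\<^esub> e j \<in> T (Suc j))"
  shows "m \<le> t - 1 \<Longrightarrow> x \<in> T (Suc (Suc m)) \<Longrightarrow> x \<in> lcs G (Suc c) \<Longrightarrow>
         x [^]\<^bsub>G\<^esub> (n0 * (\<Prod>j\<in>{1..m}. e j)) \<in> iter_comm G (T (Suc (Suc m))) c"
proof (induction m arbitrary: x)
  case 0
  obtain c' where c': "c = Suc c'" using c by (cases c) auto
  have SR: "comm_subgroup G (T (Suc 0)) (carrier G) \<subseteq> T (Suc (Suc 0))" using T_cs[of "Suc 0"] by simp
  have opt: "\<forall>s\<in>T (Suc 0). s [^]\<^bsub>G\<^esub> n0 \<in> T (Suc (Suc 0))" using hn0 T_1 by (simp add: numeral_2_eq_2)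
  have "x \<in> iter_comm G (T (Suc 0)) (Suc c')" using 0 c' G.lcs_iter T_1 by simp
  then have "x [^]\<^bsub>G\<^esub> n0 \<in> iter_comm G (T (Suc (Suc 0))) (Suc c')"
    using G.Qlemma[OF T_normal T_normal SR, of n0] opt by blast
  then show ?case using c' by simp
next
  case (Suc m)
  obtain c' where c': "c = Suc c'" using c by (cases c) auto
  have xT: "x \<in> T (Suc (Suc m))" using Suc.prems(2) T_anti[of "Suc (Suc m)" "Suc (Suc (Suc m))"] by auto
  have IH: "x [^]\<^bsub>G\<^esub> (n0 * (\<Prod>j\<in>{1..m}. e j)) \<in> iter_comm G (T (Suc (Suc m))) c"
    using Suc.IH[OF _ xT Suc.prems(3)] Suc.prems(1) by simp
  have SR: "comm_subgroup G (T (Suc (Suc m))) (carrier G) \<subseteq> T (Suc (Suc (Suc m)))" using T_cs[of "Suc (Suc m)"] by simp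
  have j: "Suc m \<in> {1..t-1}" using Suc.prems(1) by simp
  have opt: "(\<forall>s\<in>T (Suc (Suc m)). s [^]\<^bsub>G\<^esub> e (Suc m) \<in> T (Suc (Suc (Suc m)))) \<or>
     ((\<forall>b\<in>carrier G. b [^]\<^bsub>G\<^esub> e (Suc m) \<in> T (Suc (Suc m))) \<and>
      (\<forall>s\<in>T (Suc (Suc m)). \<forall>s'\<in>T (Suc (Suc m)). cm G s s' \<in> comm_subgroup G (T (Suc (Suc (Suc m)))) (carrier G)))"
    using he j T_opt2[OF surj, of "Suc (Suc m)"] by auto
  have "(x [^]\<^bsub>G\<^esub> (n0 * (\<Prod>j\<in>{1..m}. e j))) [^]\<^bsub>G\<^esub> e (Suc m) \<in> iter_comm G (T (Suc (Suc (Suc m)))) (Suc c')"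
    using G.Qlemma[OF T_normal T_normal SR opt] IH c' by blast
  moreover have "x \<in> carrier G" using xT unfolding pre_def by auto
  ultimately have "x [^]\<^bsub>G\<^esub> (n0 * (\<Prod>j\<in>{1..m}. e j) * e (Suc m)) \<in> iter_comm G (T (Suc (Suc (Suc m)))) c"
    using c' by (simp add: G.nat_pow_pow)
  moreover have "n0 * (\<Prod>j\<in>{1..Suc m}. e j) = n0 * (\<Prod>j\<in>{1..m}. e j) * e (Suc m)"
    by (simp add: atLeastAtMostSuc_conv mult.commute mult.left_commute)
  ultimately show ?case by (simp add: mult.assoc)
qed

end


lemma exp_props: assumes "group K" "finite (carrier K)"
  shows "group_exponent K > 0 \<and> (\<forall>x\<in>carrier K. x [^]\<^bsub>K\<^esub> group_exponent K = \<one>\<^bsub>K\<^esub>)"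
proof -
  interpret K: group K by fact
  have ex: "\<exists>n::nat>0. \<forall>x\<in>carrier K. x [^]\<^bsub>K\<^esub> n = \<one>\<^bsub>K\<^esub>"
    using K.order_gt_0_iff_finite assms(2) K.pow_order_eq_1 by blast
  then have "0 < (LEAST n::nat. n > 0 \<and> (\<forall>x\<in>carrier K. x [^]\<^bsub>K\<^esub> n = \<one>\<^bsub>K\<^esub>)) \<and>
     (\<forall>x\<in>carrier K. x [^]\<^bsub>K\<^esub> (LEAST n::nat. n > 0 \<and> (\<forall>x\<in>carrier K. x [^]\<^bsub>K\<^esub> n = \<one>\<^bsub>K\<^esub>)) = \<one>\<^bsub>K\<^esub>)"
    by (rule LeastI_ex)
  then show ?thesis unfolding group_exponent_def using ex by simp
qed

lemma exp_le: assumes "n > 0" "\<forall>x\<in>carrier K. x [^]\<^bsub>K\<^esub> (n::nat) = \<one>\<^bsub>K\<^esub>"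
  shows "group_exponent K \<le> n"
proof -
  have ex: "\<exists>n::nat>0. \<forall>x\<in>carrier K. x [^]\<^bsub>K\<^esub> n = \<one>\<^bsub>K\<^esub>" using assms by blast
  have "(LEAST n::nat. n > 0 \<and> (\<forall>x\<in>carrier K. x [^]\<^bsub>K\<^esub> n = \<one>\<^bsub>K\<^esub>)) \<le> n"
    by (rule Least_le) (use assms in blast)
  then show ?thesis unfolding group_exponent_def using ex by simp
qed

context group begin

lemma mod_finite: "finite (carrier G) \<Longrightarrow> finite (carrier (G Mod N))"
  by (simp add: carrier_FactGroup)

lemma quot_pow: assumes N: "N \<lhd> G" and fin: "finite (carrier G)" and g: "g \<in> carrier G"
  shows "g [^] group_exponent (G Mod N) \<in> N"
proof -
  interpret Q: group "G Mod N" using N normal.factorgroup_is_group by blast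
  interpret hg: group_hom G "G Mod N" "\<lambda>a. N #> a"
    using normal.r_coset_hom_Mod[OF N] by (simp add: group_hom_def group_hom_axioms_def is_group Q.is_group)
  have "N #> g \<in> carrier (G Mod N)" using g by (rule hg.hom_closed)
  then have "(N #> g) [^]\<^bsub>G Mod N\<^esub> group_exponent (G Mod N) = \<one>\<^bsub>G Mod N\<^esub>"
    using exp_props[OF Q.is_group mod_finite[OF fin]] by blast
  then have "N #> (g [^] group_exponent (G Mod N)) = \<one>\<^bsub>G Mod N\<^esub>" using hg.hom_nat_pow g by simp
  then show ?thesis using quot_one_iff[OF N] g by simp
qed

lemma quot_exp_le: assumes N: "N \<lhd> G" and n: "n > 0" and h: "\<forall>g\<in>carrier G. g [^] (n::nat) \<in> N"
  shows "group_exponent (G Mod N) \<le> n"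
proof (rule exp_le[OF n], rule ballI)
  interpret Q: group "G Mod N" using N normal.factorgroup_is_group by blast
  interpret hg: group_hom G "G Mod N" "\<lambda>a. N #> a"
    using normal.r_coset_hom_Mod[OF N] by (simp add: group_hom_def group_hom_axioms_def is_group Q.is_group)
  fix XX assume "XX \<in> carrier (G Mod N)"
  then obtain g where g: "g \<in> carrier G" "XX = N #> g" by (auto simp: carrier_FactGroup)
  have "XX [^]\<^bsub>G Mod N\<^esub> n = N #> (g [^] n)" using g hg.hom_nat_pow by simp
  also have "\<dots> = \<one>\<^bsub>G Mod N\<^esub>" using quot_one_iff[OF N] h g by simp
  finally show "XX [^]\<^bsub>G Mod N\<^esub> n = \<one>\<^bsub>G Mod N\<^esub>" .
qed

lemma sub_exp: assumes L: "subgroup L G" and fin: "finite (carrier G)" and y: "y \<in> L"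
  shows "y [^] group_exponent (G\<lparr>carrier := L\<rparr>) = \<one>"
proof -
  have grp: "group (G\<lparr>carrier := L\<rparr>)" using subgroup.subgroup_is_group[OF L is_group] .
  have fin': "finite (carrier (G\<lparr>carrier := L\<rparr>))" using finite_subset[OF subgroup.subset[OF L] fin] by simp
  have "y [^]\<^bsub>G\<lparr>carrier := L\<rparr>\<^esub> group_exponent (G\<lparr>carrier := L\<rparr>) = \<one>\<^bsub>G\<lparr>carrier := L\<rparr>\<^esub>"
    using exp_props[OF grp fin'] y by simp
  then show ?thesis using nat_pow_consistent by simp
qed

lemma sub_exp_le: assumes L: "subgroup L G" and n: "n > 0" and h: "\<forall>g\<in>carrier G. g [^] (n::nat) = \<one>"
  shows "group_exponent (G\<lparr>carrier := L\<rparr>) \<le> n"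
  by (rule exp_le[OF n]) (use h subgroup.subset[OF L] nat_pow_consistent in auto)

lemma mult_exp:
  assumes R: "R \<lhd> G" and n: "n > 0"
    and h: "\<forall>x\<in>R \<inter> lcs G (Suc c). x [^] (n::nat) \<in> iter_comm G R c"
  shows "group_exponent (c_nilp_multiplier G R c) \<le> n"
proof -
  define S where "S = iter_comm G R c"
  define K where "K = R \<inter> lcs G (Suc c)"
  have S: "S \<lhd> G" unfolding S_def using iter_normal[OF R] .
  have Sc: "S \<subseteq> carrier G" using normal_subset[OF S] .
  have Kc: "K \<subseteq> carrier G" unfolding K_def using normal_subset[OF R] by auto
  have rc: "\<And>x. S #>\<^bsub>G\<lparr>carrier := K\<rparr>\<^esub> x = S #> x" unfolding r_coset_def by simp
  have sm: "\<And>A B. A <#>\<^bsub>G\<lparr>carrier := K\<rparr>\<^esub> B = A <#> B" unfolding set_mult_def by simp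
  have pw: "\<And>x m. x \<in> carrier G \<Longrightarrow> (S #> x) [^]\<^bsub>G\<lparr>carrier := K\<rparr> Mod S\<^esub> (m::nat) = S #> (x [^] m)"
  proof -
    fix x m assume x: "x \<in> carrier G"
    show "(S #> x) [^]\<^bsub>G\<lparr>carrier := K\<rparr> Mod S\<^esub> (m::nat) = S #> (x [^] m)"
    proof (induction m)
      case 0 then show ?case using coset_mult_one[OF Sc] by (simp add: FactGroup_def)
    next
      case (Suc m)
      then show ?case using normal.rcos_sum[OF S, of "x [^] m" x] x by (simp add: FactGroup_def sm)
    qed
  qed
  show ?thesis unfolding c_nilp_multiplier_def S_def[symmetric]
  proof (rule exp_le[OF n], rule ballI)
    fix XX assume "XX \<in> carrier (G\<lparr>carrier := R \<inter> lcs G (Suc c)\<rparr> Mod S)"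
    then obtain x where x: "x \<in> K" "XX = S #> x"
      unfolding K_def[symmetric] by (auto simp: FactGroup_def RCOSETS_def rc)
    have xc: "x \<in> carrier G" using x Kc by auto
    have "XX [^]\<^bsub>G\<lparr>carrier := K\<rparr> Mod S\<^esub> n = S #> (x [^] n)" using pw xc x by simp
    also have "\<dots> = S" using coset_join2[OF _ normal_sub[OF S]] h x xc unfolding K_def S_def by simp
    finally show "XX [^]\<^bsub>G\<lparr>carrier := R \<inter> lcs G (Suc c)\<rparr> Mod S\<^esub> n = \<one>\<^bsub>G\<lparr>carrier := R \<inter> lcs G (Suc c)\<rparr> Mod S\<^esub>"
      unfolding K_def by (simp add: FactGroup_def)
  qed
qed

end


theorem corollary27:
  fixes G :: "('g, 'gb) monoid_scheme" and F :: "('f, 'fb) monoid_scheme"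
    and \<phi> :: "'f \<Rightarrow> 'g" and c t :: nat
  assumes "c \<ge> 1"
    and "group G" and "finite (carrier G)"
    and "t \<ge> 1" and "lcs G (Suc t) = {\<one>\<^bsub>G\<^esub>}" and "lcs G t \<noteq> {\<one>\<^bsub>G\<^esub>}"
    and "free_group F" and "\<phi> \<in> hom F G" and "\<phi> ` carrier F = carrier G"
  shows "group_exponent (c_nilp_multiplier F (kernel F G \<phi>) c)
           \<le> group_exponent (G Mod lcs G 2) *
             (\<Prod>j = 1..t - 1. min (group_exponent (G Mod lcs G (j + 1)))
                                   (group_exponent (G\<lparr>carrier := lcs G (j + 1)\<rparr>)))
       \<and> (\<forall>(p::nat) e n. Factorial_Ring.prime p \<and> card (carrier G) = p ^ n \<and> group_exponent G = p ^ e
            \<longrightarrow> group_exponent (c_nilp_multiplier F (kernel F G \<phi>) c) \<le> p ^ (e * t))"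
proof -
  have Fg: "group F" using assms(7) unfolding free_group_def by blast
  interpret hs: hsetup F G \<phi> using Fg assms(2,8) by (simp add: hsetup_def hsetup_axioms_def)
  have fin: "finite (carrier G)" by (rule assms(3))
  define n0 where "n0 = group_exponent (G Mod lcs G 2)"
  define ee where "ee = (\<lambda>j. min (group_exponent (G Mod lcs G (j + 1)))
                                   (group_exponent (G\<lparr>carrier := lcs G (j + 1)\<rparr>)))"
  have modpos: "\<And>k. group_exponent (G Mod lcs G k) > 0"
    using exp_props normal.factorgroup_is_group[OF hs.H.lcs_normal] hs.H.mod_finite[OF fin] by blast
  have subpos: "\<And>k. group_exponent (G\<lparr>carrier := lcs G k\<rparr>) > 0"
  proof -
    fix k
    have L: "subgroup (lcs G k) G" using hs.H.normal_sub[OF hs.H.lcs_normal] .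
    show "group_exponent (G\<lparr>carrier := lcs G k\<rparr>) > 0"
      using exp_props[OF subgroup.subgroup_is_group[OF L hs.H.is_group]]
        finite_subset[OF subgroup.subset[OF L] fin] by simp
  qed
  have n0pos: "n0 > 0" unfolding n0_def using modpos .
  have eepos: "\<And>j. ee j > 0" unfolding ee_def using modpos subpos by simp
  have hn0: "\<forall>f\<in>carrier F. f [^]\<^bsub>F\<^esub> n0 \<in> hs.T 2"
  proof
    fix f assume f: "f \<in> carrier F"
    have "\<phi> (f [^]\<^bsub>F\<^esub> n0) = \<phi> f [^]\<^bsub>G\<^esub> n0" using hs.hg.hom_nat_pow f by simp
    moreover have "\<phi> f [^]\<^bsub>G\<^esub> n0 \<in> lcs G 2" unfolding n0_def
      using hs.H.quot_pow[OF hs.H.lcs_normal fin] f by simp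
    ultimately show "f [^]\<^bsub>F\<^esub> n0 \<in> hs.T 2" unfolding pre_def using f by simp
  qed
  have he: "\<forall>j\<in>{1..t-1}. (\<forall>s\<in>hs.T (Suc j). s [^]\<^bsub>F\<^esub> ee j \<in> hs.T (Suc (Suc j))) \<or> (\<forall>b\<in>carrier F. b [^]\<^bsub>F\<^esub> ee j \<in> hs.T (Suc j))"
  proof
    fix j
    show "(\<forall>s\<in>hs.T (Suc j). s [^]\<^bsub>F\<^esub> ee j \<in> hs.T (Suc (Suc j))) \<or> (\<forall>b\<in>carrier F. b [^]\<^bsub>F\<^esub> ee j \<in> hs.T (Suc j))"
    proof (cases "group_exponent (G Mod lcs G (Suc j)) \<le> group_exponent (G\<lparr>carrier := lcs G (Suc j)\<rparr>)")
      case True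
      then have eq: "ee j = group_exponent (G Mod lcs G (Suc j))" unfolding ee_def by simp
      have "\<forall>b\<in>carrier F. b [^]\<^bsub>F\<^esub> ee j \<in> hs.T (Suc j)"
      proof
        fix b assume b: "b \<in> carrier F"
        have "\<phi> (b [^]\<^bsub>F\<^esub> ee j) = \<phi> b [^]\<^bsub>G\<^esub> ee j" using hs.hg.hom_nat_pow b by simp
        moreover have "\<phi> b [^]\<^bsub>G\<^esub> ee j \<in> lcs G (Suc j)" unfolding eq
          using hs.H.quot_pow[OF hs.H.lcs_normal fin] b by simp
        ultimately show "b [^]\<^bsub>F\<^esub> ee j \<in> hs.T (Suc j)" unfolding pre_def using b by simp
      qed
      then show ?thesis by blast
    next
      case False
      then have eq: "ee j = group_exponent (G\<lparr>carrier := lcs G (Suc j)\<rparr>)" unfolding ee_def by simp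
      have "\<forall>s\<in>hs.T (Suc j). s [^]\<^bsub>F\<^esub> ee j \<in> hs.T (Suc (Suc j))"
      proof
        fix s assume s: "s \<in> hs.T (Suc j)"
        have sc: "s \<in> carrier F" and ps: "\<phi> s \<in> lcs G (Suc j)" using s unfolding pre_def by auto
        have "\<phi> (s [^]\<^bsub>F\<^esub> ee j) = \<phi> s [^]\<^bsub>G\<^esub> ee j" using hs.hg.hom_nat_pow sc by simp
        also have "\<dots> = \<one>\<^bsub>G\<^esub>" unfolding eq
          using hs.H.sub_exp[OF hs.H.normal_sub[OF hs.H.lcs_normal] fin ps] .
        finally have "\<phi> (s [^]\<^bsub>F\<^esub> ee j) = \<one>\<^bsub>G\<^esub>" .
        moreover have "\<one>\<^bsub>G\<^esub> \<in> lcs G (Suc (Suc j))"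
          using subgroup.one_closed[OF hs.H.normal_sub[OF hs.H.lcs_normal]] .
        ultimately show "s [^]\<^bsub>F\<^esub> ee j \<in> hs.T (Suc (Suc j))" unfolding pre_def using sc by simp
      qed
      then show ?thesis by blast
    qed
  qed
  define NN where "NN = n0 * (\<Prod>j\<in>{1..t-1}. ee j)"
  have NNpos: "NN > 0" unfolding NN_def using n0pos eepos by simp
  have ker: "hs.T (Suc (Suc (t - 1))) = kernel F G \<phi>" using hs.T_top[OF assms(5)] assms(4) by simp
  have main: "\<forall>x\<in>kernel F G \<phi> \<inter> lcs F (Suc c). x [^]\<^bsub>F\<^esub> NN \<in> iter_comm F (kernel F G \<phi>) c"
  proof
    fix x assume x: "x \<in> kernel F G \<phi> \<inter> lcs F (Suc c)"
    show "x [^]\<^bsub>F\<^esub> NN \<in> iter_comm F (kernel F G \<phi>) c"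
      using hs.chain[OF assms(1,9) hn0 he, of "t - 1" x] x ker unfolding NN_def by simp
  qed
  have part1: "group_exponent (c_nilp_multiplier F (kernel F G \<phi>) c) \<le> NN"
    using hs.G.mult_exp[OF hs.hg.normal_kernel NNpos main] .
  have part2: "\<forall>(p::nat) e n. Factorial_Ring.prime p \<and> card (carrier G) = p ^ n \<and> group_exponent G = p ^ e
            \<longrightarrow> group_exponent (c_nilp_multiplier F (kernel F G \<phi>) c) \<le> p ^ (e * t)"
  proof (intro allI impI)
    fix p e n :: nat
    assume "Factorial_Ring.prime p \<and> card (carrier G) = p ^ n \<and> group_exponent G = p ^ e"
    then have ge: "group_exponent G = p ^ e" by blast
    have gp: "group_exponent G > 0" and gone: "\<forall>x\<in>carrier G. x [^]\<^bsub>G\<^esub> group_exponent G = \<one>\<^bsub>G\<^esub>"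
      using exp_props[OF assms(2) fin] by auto
    have pe: "p ^ e > 0" using gp ge by simp
    have n0le: "n0 \<le> p ^ e" unfolding n0_def
      by (rule hs.H.quot_exp_le[OF hs.H.lcs_normal pe]) (use gone ge subgroup.one_closed[OF hs.H.normal_sub[OF hs.H.lcs_normal]] in simp)
    have eele: "\<And>j. ee j \<le> p ^ e"
    proof -
      fix j
      have "group_exponent (G\<lparr>carrier := lcs G (j + 1)\<rparr>) \<le> p ^ e"
        by (rule hs.H.sub_exp_le[OF hs.H.normal_sub[OF hs.H.lcs_normal] pe]) (use gone ge in simp)
      then show "ee j \<le> p ^ e" unfolding ee_def by simp
    qed
    have "(\<Prod>j\<in>{1..t-1}. ee j) \<le> (p ^ e) ^ (t - 1)"
      by (rule prod_le_power) (use eele pe in auto)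
    then have "NN \<le> p ^ e * (p ^ e) ^ (t - 1)" unfolding NN_def using n0le mult_le_mono by blast
    also have "\<dots> = p ^ (e * t)" using assms(4)
      by (metis Suc_diff_1 less_le_trans power_Suc power_mult zero_less_one)
    finally show "group_exponent (c_nilp_multiplier F (kernel F G \<phi>) c) \<le> p ^ (e * t)" using part1 by simp
  qed
  show ?thesis using part1 part2 unfolding NN_def ee_def n0_def by simp
qed


end
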